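(* Let $(a_k)_{k\ge1}$ be a sequence of positive real numbers for which there exist $\rho\in(0,1)$, constants $c,C>0$ and $m\in\mathbb{N}$ such that $ck^m\rho^k\le a_k\le Ck^m\rho^k$ for all sufficiently large $k$. Define $K(\epsilon)=\min\{k\in\mathbb{N}: a_k<\epsilon\}$ for $\epsilon>0$. Then, as $\epsilon\to0$, $$K(\epsilon)=\Omega\left(\frac{\rho}{1-\rho}\ln(1/\epsilon)\right)\quad\text{and}\quad K(\epsilon)=O\left(\frac{1}{1-\rho}\ln(1/\epsilon)\right),$$ and consequently $K(\epsilon)=\Theta\left(\frac{\rho}{1-\rho}\ln(1/\epsilon)\right)$. *)

theory Defs
  imports Complex_Main "HOL-Library.Landau_Symbols"
begin

definition Kmin :: "(nat \<Rightarrow> real) \<Rightarrow> real \<Rightarrow> nat" where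
  "Kmin a \<epsilon> = (LEAST k. k \<ge> 1 \<and> a k < \<epsilon>)"

end

theory Submission
  imports Defs "HOL-Real_Asymp.Real_Asymp"
begin

theorem lemmaB1:
  fixes a :: "nat \<Rightarrow> real" and \<rho> c C :: real and m :: nat
  assumes pos: "\<And>k. k \<ge> 1 \<Longrightarrow> a k > 0"
    and rho: "0 < \<rho>" "\<rho> < 1"
    and cC: "c > 0" "C > 0"
    and bounds: "\<forall>\<^sub>F k in sequentially.
        c * real k ^ m * \<rho> ^ k \<le> a k \<and> a k \<le> C * real k ^ m * \<rho> ^ k"
  shows "(\<lambda>\<epsilon>. real (Kmin a \<epsilon>)) \<in> \<Omega>[at_right 0](\<lambda>\<epsilon>. \<rho> / (1 - \<rho>) * ln (1 / \<epsilon>))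
    \<and> (\<lambda>\<epsilon>. real (Kmin a \<epsilon>)) \<in> O[at_right 0](\<lambda>\<epsilon>. 1 / (1 - \<rho>) * ln (1 / \<epsilon>))
    \<and> (\<lambda>\<epsilon>. real (Kmin a \<epsilon>)) \<in> \<Theta>[at_right 0](\<lambda>\<epsilon>. \<rho> / (1 - \<rho>) * ln (1 / \<epsilon>))"
proof -
  define \<sigma> where "\<sigma> = sqrt \<rho>"
  have s0: "0 < \<sigma>" and s1: "\<sigma> < 1" using rho by (auto simp: \<sigma>_def)
  have ss: "\<rho> = \<sigma> * \<sigma>" using rho by (simp add: \<sigma>_def)
  have lim: "(\<lambda>k::nat. real k ^ m * \<sigma> ^ k) \<longlonglongrightarrow> 0" using s0 s1 by real_asymp
  then have "\<forall>\<^sub>F k in sequentially. C * (real k ^ m * \<sigma> ^ k) < 1"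
  proof -
    have "(\<lambda>k::nat. C * (real k ^ m * \<sigma> ^ k)) \<longlonglongrightarrow> C * 0" by (intro tendsto_mult lim tendsto_const)
    then show ?thesis by (intro order_tendstoD) auto
  qed
  with bounds have "\<forall>\<^sub>F k in sequentially. (c * real k ^ m * \<rho> ^ k \<le> a k \<and> a k \<le> C * real k ^ m * \<rho> ^ k)
      \<and> C * (real k ^ m * \<sigma> ^ k) < 1" by eventually_elim auto
  then obtain N0 where N0: "\<And>k. k \<ge> N0 \<Longrightarrow> (c * real k ^ m * \<rho> ^ k \<le> a k \<and> a k \<le> C * real k ^ m * \<rho> ^ k)
      \<and> C * (real k ^ m * \<sigma> ^ k) < 1" unfolding eventually_sequentially by blast
  define N where "N = N0 + 1"
  have N1: "N \<ge> 1" by (simp add: N_def)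
  have lowb: "c * \<rho> ^ k \<le> a k" if "k \<ge> N" for k
  proof -
    have "k \<ge> 1" using that N1 by simp
    then have "1 \<le> real k ^ m" by simp
    then have "c * \<rho> ^ k \<le> c * real k ^ m * \<rho> ^ k" using cC rho
      by (simp add: mult_right_mono)
    also have "\<dots> \<le> a k" using N0[of k] that by (simp add: N_def)
    finally show ?thesis .
  qed
  have upb: "a k \<le> \<sigma> ^ k" if "k \<ge> N" for k
  proof -
    have h: "C * (real k ^ m * \<sigma> ^ k) < 1" "a k \<le> C * real k ^ m * \<rho> ^ k"
      using N0[of k] that by (auto simp: N_def)
    have "C * real k ^ m * \<rho> ^ k = (C * (real k ^ m * \<sigma> ^ k)) * \<sigma> ^ k"
      by (simp add: ss power_mult_distrib)
    also have "\<dots> \<le> 1 * \<sigma> ^ k" using h s0 by (intro mult_right_mono) auto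
    finally show ?thesis using h by simp
  qed
  define m0 where "m0 = Min (a ` {1..N})"
  have m0pos: "m0 > 0" unfolding m0_def using N1 pos by (subst Min_gr_iff) auto
  have m0le: "k \<in> {1..N} \<Longrightarrow> m0 \<le> a k" for k unfolding m0_def by simp
  define Ls where "Ls = - ln \<sigma>"
  have Ls: "Ls > 0" using s0 s1 by (simp add: Ls_def)
  define L where "L = - ln \<rho>"
  have L: "L > 0" using rho by (simp add: L_def)
  define T where "T = 1 + 2 * \<bar>ln c\<bar>"
  define \<delta> where "\<delta> = min m0 (exp (- T))"
  have \<delta>: "\<delta> > 0" using m0pos by (simp add: \<delta>_def)
  define A where "A = real N + 1 + 1 / Ls"
  define B where "B = 1 / (2 * L)"
  have A: "A > 0" using Ls unfolding A_def by (smt (verit) divide_pos_pos of_nat_0_le_iff)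
  have B: "B > 0" using L by (simp add: B_def)
  have key: "B * ln (1/\<epsilon>) \<le> real (Kmin a \<epsilon>) \<and> real (Kmin a \<epsilon>) \<le> A * ln (1/\<epsilon>) \<and> ln (1/\<epsilon>) \<ge> T"
    if e0: "0 < \<epsilon>" and e1: "\<epsilon> < \<delta>" for \<epsilon>
  proof -
    have "\<epsilon> < exp (-T)" using e1 by (simp add: \<delta>_def)
    then have "ln \<epsilon> < -T" using e0 by (metis ln_exp ln_less_cancel_iff exp_gt_zero)
    then have lT: "ln (1/\<epsilon>) > T" using e0 by (simp add: ln_div)
    have T1: "T \<ge> 1" by (simp add: T_def)
    define l where "l = ln (1/\<epsilon>)"
    have lT': "l > T" using lT by (simp add: l_def)
    define k0 where "k0 = N + nat \<lceil>l / Ls\<rceil>"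
    have "real k0 \<ge> real N + l / Ls" unfolding k0_def by linarith
    then have "real k0 * Ls \<ge> real N * Ls + l" using Ls by (simp add: field_simps)
    then have "real k0 * Ls > l" using N1 Ls by (smt (verit) mult_pos_pos of_nat_0_less_iff le_numeral_extra(2) less_le_trans zero_less_one le_eq_less_or_eq)
    then have "ln (\<sigma> ^ k0) < ln \<epsilon>" using s0 e0 by (simp add: ln_realpow Ls_def l_def ln_div)
    then have "\<sigma> ^ k0 < \<epsilon>" using s0 e0 by simp
    moreover have "k0 \<ge> N" by (simp add: k0_def)
    ultimately have ak0: "a k0 < \<epsilon>" using upb by (meson le_less_trans)
    have k01: "k0 \<ge> 1" using N1 \<open>k0 \<ge> N\<close> by simp
    have ex: "k0 \<ge> 1 \<and> a k0 < \<epsilon>" using ak0 k01 by simp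
    have Kle: "Kmin a \<epsilon> \<le> k0" unfolding Kmin_def by (rule Least_le) (use ex in auto)
    have KP: "Kmin a \<epsilon> \<ge> 1 \<and> a (Kmin a \<epsilon>) < \<epsilon>" unfolding Kmin_def by (rule LeastI) (use ex in auto)
    define K where "K = Kmin a \<epsilon>"
    have KN: "K > N"
    proof (rule ccontr)
      assume "\<not> N < K"
      then have "K \<in> {1..N}" using KP by (auto simp: K_def)
      then have "m0 \<le> a K" by (rule m0le)
      moreover have "\<epsilon> < m0" using e1 by (simp add: \<delta>_def)
      ultimately show False using KP by (simp add: K_def)
    qed
    have "c * \<rho> ^ K < \<epsilon>" using lowb[of K] KN KP by (simp add: K_def)
    then have "ln (c * \<rho> ^ K) < ln \<epsilon>" using cC rho e0 by (subst ln_less_cancel_iff) auto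
    then have "ln c - real K * L < - l" using cC rho e0 by (simp add: ln_mult ln_realpow L_def l_def ln_div)
    then have "real K * L > l + ln c" by simp
    moreover have "l + ln c \<ge> l / 2" using lT' by (simp add: T_def)
    ultimately have "real K * L \<ge> l / 2" by simp
    then have lo: "B * l \<le> real K" using L by (simp add: B_def field_simps)
    have "real K \<le> real k0" using Kle by (simp add: K_def)
    also have "\<dots> \<le> real N + l / Ls + 1" unfolding k0_def
    proof -
      have "l / Ls \<ge> 0" using lT' T1 Ls by simp
      then have "real (nat \<lceil>l / Ls\<rceil>) = of_int \<lceil>l / Ls\<rceil>" by simp
      also have "\<dots> \<le> l / Ls + 1" by linarith
      finally show "real (N + nat \<lceil>l / Ls\<rceil>) \<le> real N + l / Ls + 1" by simp
    qed
    also have "\<dots> \<le> (real N + 1) * l + l / Ls"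
    proof -
      have "(real N + 1) * 1 \<le> (real N + 1) * l" using lT' T1 by (intro mult_left_mono) auto
      then show ?thesis by simp
    qed
    also have "\<dots> = A * l" by (simp add: A_def field_simps)
    finally show ?thesis using lo lT by (simp add: K_def l_def)
  qed
  have ev: "\<forall>\<^sub>F \<epsilon> in at_right 0. B * ln (1/\<epsilon>) \<le> real (Kmin a \<epsilon>) \<and> real (Kmin a \<epsilon>) \<le> A * ln (1/\<epsilon>) \<and> ln (1/\<epsilon>) \<ge> T"
    unfolding eventually_at_right_field using \<delta> key by blast
  have T0: "T \<ge> 0" by (simp add: T_def)
  have r1: "1 - \<rho> > 0" using rho by simp
  have O1: "(\<lambda>\<epsilon>. real (Kmin a \<epsilon>)) \<in> O[at_right 0](\<lambda>\<epsilon>. 1 / (1 - \<rho>) * ln (1 / \<epsilon>))"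
  proof (rule landau_o.bigI[of "A * (1 - \<rho>)"])
    show "A * (1 - \<rho>) > 0" using A r1 by simp
    show "\<forall>\<^sub>F x in at_right 0. norm (real (Kmin a x)) \<le> A * (1 - \<rho>) * norm (1 / (1 - \<rho>) * ln (1 / x))"
      using ev
    proof eventually_elim
      case (elim x)
      then have "ln (1/x) \<ge> 0" using T0 by linarith
      then show ?case using elim r1 by (simp add: abs_mult)
    qed
  qed
  have O2: "(\<lambda>\<epsilon>. real (Kmin a \<epsilon>)) \<in> O[at_right 0](\<lambda>\<epsilon>. \<rho> / (1 - \<rho>) * ln (1 / \<epsilon>))"
  proof (rule landau_o.bigI[of "A * (1 - \<rho>) / \<rho>"])
    show "A * (1 - \<rho>) / \<rho> > 0" using A r1 rho by simp
    show "\<forall>\<^sub>F x in at_right 0. norm (real (Kmin a x)) \<le> A * (1 - \<rho>) / \<rho> * norm (\<rho> / (1 - \<rho>) * ln (1 / x))"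
      using ev
    proof eventually_elim
      case (elim x)
      then have "ln (1/x) \<ge> 0" using T0 by linarith
      then show ?case using elim r1 rho by (simp add: abs_mult)
    qed
  qed
  have Om: "(\<lambda>\<epsilon>. real (Kmin a \<epsilon>)) \<in> \<Omega>[at_right 0](\<lambda>\<epsilon>. \<rho> / (1 - \<rho>) * ln (1 / \<epsilon>))"
    unfolding bigomega_iff_bigo
  proof (rule landau_o.bigI[of "\<rho> / (1 - \<rho>) / B"])
    show "\<rho> / (1 - \<rho>) / B > 0" using B r1 rho by simp
    show "\<forall>\<^sub>F x in at_right 0. norm (\<rho> / (1 - \<rho>) * ln (1 / x)) \<le> \<rho> / (1 - \<rho>) / B * norm (real (Kmin a x))"
      using ev
    proof eventually_elim
      case (elim x)
      then have l0: "ln (1/x) \<ge> 0" using T0 by linarith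
      have "norm (\<rho> / (1 - \<rho>) * ln (1 / x)) = \<rho> / (1 - \<rho>) / B * (B * ln (1/x))"
        using l0 r1 rho B by (simp add: abs_mult)
      also have "\<dots> \<le> \<rho> / (1 - \<rho>) / B * real (Kmin a x)"
        using elim r1 rho B by (intro mult_left_mono) auto
      finally show ?case by simp
    qed
  qed
  show ?thesis using O1 O2 Om by (auto intro: bigthetaI)
qed

end
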